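(* Let $X$ be a locally connected compact metrizable group with an invariant metric $\delta$, let $T$ be a minimal rotation of $X$, let $G$ be a locally compact second countable group, $f\colon X\to G$ continuous, $H$ a closed subgroup of $G$, and let $y\mapsto H_y$ be a consistent selection of subgroups in the essential ranges of $f$. Let $U$ be a relatively compact open neighbourhood of $\mathbf 1_G$ such that $E_z(f)\cap(\bar U H_z\setminus UH_z)=\varnothing$ for some $z\in X$. Then there exists $\varepsilon>0$ such that for all $y\in X$ and $n\in\mathbb Z$ with $\delta(y,z)<\varepsilon$ and $\delta(T^ny,z)<\varepsilon$, either $f(n,y)H_y\cap UH_y\neq\varnothing$ or $f(n,y)H_y\cap\bar UH_y=\varnothing$. Furthermore, for every $y\in X$ and every $g\in E_y(f)$ we have $gH_y\subseteq E_y(f)$.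
   Context: The cocycle is $f(n,x)=f(T^{n-1}x)\cdots f(x)$ for $n\ge1$, $f(0,x)=\mathbf 1_G$, $f(n,x)=f(-n,T^nx)^{-1}$ for $n<0$. $E_x(f)$ is the set of $g\in G$ such that for every open neighbourhood $U$ of $g$ and every open neighbourhood $\mathcal O$ of $x$ there is $n\neq0$ with $T^{-n}\mathcal O\cap\mathcal O\cap\{y:f(n,y)\in U\}\neq\varnothing$. $H^G=\{gHg^{-1}:g\in G\}$, topologised via the bijection with $G/N(H)$, $N(H)=\{g:gHg^{-1}=H\}$. A consistent selection of subgroups in the essential ranges of $f$ is a continuous map $y\mapsto H_y$ from $X$ into $H^G$ such that $H_x\subseteq E_x(f)$ and $H_{T^nx}=f(n,x)H_xf(n,x)^{-1}$ for all $x\in X$, $n\in\mathbb Z$. *)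

theory Defs
  imports "HOL-Analysis.Analysis" "HOL-Algebra.Coset"
begin

definition topological_group :: "('a::topological_space) monoid \<Rightarrow> bool" where
  "topological_group M \<longleftrightarrow> group M \<and> carrier M = UNIV \<and>
     continuous_on UNIV (\<lambda>p::'a \<times> 'a. fst p \<otimes>\<^bsub>M\<^esub> snd p) \<and>
     continuous_on UNIV (\<lambda>x. m_inv M x)"

definition Tpow :: "('x \<Rightarrow> 'x) \<Rightarrow> int \<Rightarrow> 'x \<Rightarrow> 'x" where
  "Tpow T n = (if 0 \<le> n then T ^^ nat n else (the_inv T) ^^ nat (- n))"

fun cocycle_nat :: "'g monoid \<Rightarrow> ('x \<Rightarrow> 'x) \<Rightarrow> ('x \<Rightarrow> 'g) \<Rightarrow> nat \<Rightarrow> 'x \<Rightarrow> 'g" where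
  "cocycle_nat G T f 0 x = \<one>\<^bsub>G\<^esub>"
| "cocycle_nat G T f (Suc n) x = f ((T ^^ n) x) \<otimes>\<^bsub>G\<^esub> cocycle_nat G T f n x"

definition cocycle :: "'g monoid \<Rightarrow> ('x \<Rightarrow> 'x) \<Rightarrow> ('x \<Rightarrow> 'g) \<Rightarrow> int \<Rightarrow> 'x \<Rightarrow> 'g" where
  "cocycle G T f n x = (if 0 \<le> n then cocycle_nat G T f (nat n) x
      else m_inv G (cocycle_nat G T f (nat (- n)) (Tpow T n x)))"

definition ess_range :: "'g::topological_space monoid \<Rightarrow> ('x::topological_space \<Rightarrow> 'x) \<Rightarrow> ('x \<Rightarrow> 'g) \<Rightarrow> 'x \<Rightarrow> 'g set" where
  "ess_range G T f x = {g. \<forall>U W. open U \<longrightarrow> g \<in> U \<longrightarrow> open W \<longrightarrow> x \<in> W \<longrightarrow>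
      (\<exists>n::int. n \<noteq> 0 \<and> (\<exists>y. y \<in> W \<and> Tpow T n y \<in> W \<and> cocycle G T f n y \<in> U))}"

definition conj_sub :: "'g monoid \<Rightarrow> 'g \<Rightarrow> 'g set \<Rightarrow> 'g set" where
  "conj_sub G g H = (g <#\<^bsub>G\<^esub> H) #>\<^bsub>G\<^esub> m_inv G g"

definition conjugates :: "'g monoid \<Rightarrow> 'g set \<Rightarrow> 'g set set" where
  "conjugates G H = {conj_sub G g H | g. g \<in> carrier G}"

text \<open>Continuity of a map into H^G, where H^G carries the quotient topology of
  g \<mapsto> gHg^{-1} (equivalently the topology transported from G/N(H)):
  preimages of sets whose preimage in G is open are open.\<close>
definition continuous_into_conjugates ::
    "'g::topological_space monoid \<Rightarrow> 'g set \<Rightarrow> ('x::topological_space \<Rightarrow> 'g set) \<Rightarrow> bool" where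
  "continuous_into_conjugates G H S \<longleftrightarrow> (\<forall>y. S y \<in> conjugates G H) \<and>
     (\<forall>V. open {g. conj_sub G g H \<in> V} \<longrightarrow> open {y. S y \<in> V})"

definition consistent_selection ::
    "'g::topological_space monoid \<Rightarrow> ('x::topological_space \<Rightarrow> 'x) \<Rightarrow> ('x \<Rightarrow> 'g) \<Rightarrow> 'g set \<Rightarrow> ('x \<Rightarrow> 'g set) \<Rightarrow> bool" where
  "consistent_selection G T f H S \<longleftrightarrow> continuous_into_conjugates G H S \<and>
     (\<forall>x. S x \<subseteq> ess_range G T f x) \<and>
     (\<forall>x n. S (Tpow T n x) = conj_sub G (cocycle G T f n x) (S x))"

definition minimal_rotation :: "('x::topological_space) monoid \<Rightarrow> ('x \<Rightarrow> 'x) \<Rightarrow> bool" where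
  "minimal_rotation X T \<longleftrightarrow> (\<exists>a \<in> carrier X. T = (\<lambda>x. a \<otimes>\<^bsub>X\<^esub> x)) \<and>
     (\<forall>y. closure (range (\<lambda>n::int. Tpow T n y)) = UNIV)"

end

theory Submission
  imports Defs
begin


lemma Tpow_0[simp]: "Tpow T 0 x = x"
  by (simp add: Tpow_def)

lemma Tpow_succ:
  assumes "bij T"
  shows "Tpow T (n+1) x = T (Tpow T n x)"
proof (cases "0 \<le> n")
  case True
  then have "nat (n+1) = Suc (nat n)" by simp
  then show ?thesis using True by (simp add: Tpow_def)
next
  case False
  define j where "j = nat (-(n+1))"
  have nj: "nat (-n) = Suc j" using False by (simp add: j_def)
  have A: "Tpow T n x = the_inv T ((the_inv T ^^ j) x)"
    using False nj by (simp add: Tpow_def)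
  have B: "Tpow T (n+1) x = (the_inv T ^^ j) x"
  proof (cases "n+1 = 0")
    case True then show ?thesis by (simp add: j_def Tpow_def)
  next
    case False2: False
    with False have "\<not> 0 \<le> n+1" by simp
    then show ?thesis by (simp add: Tpow_def j_def)
  qed
  have "T (the_inv T w) = w" for w
    using assms by (metis bij_def f_the_inv_into_f iso_tuple_UNIV_I rangeI surj_def)
  then show ?thesis using A B by simp
qed

lemma Tpow_pred:
  assumes "bij T"
  shows "Tpow T n x = the_inv T (Tpow T (n+1) x)"
  using Tpow_succ[OF assms] assms by (simp add: bij_def the_inv_f_f)

lemma Tpow_add:
  assumes "bij T"
  shows "Tpow T (m+n) x = Tpow T m (Tpow T n x)"
proof (induction m rule: int_induct[where k=0])
  case base then show ?case by simp
next
  case (step1 i)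
  have "Tpow T (i+1+n) x = Tpow T ((i+n)+1) x" by (simp add: algebra_simps)
  also have "\<dots> = T (Tpow T (i+n) x)" by (rule Tpow_succ[OF assms])
  also have "\<dots> = Tpow T (i+1) (Tpow T n x)" using step1 Tpow_succ[OF assms] by simp
  finally show ?case .
next
  case (step2 i)
  have "Tpow T (i-1+n) x = the_inv T (Tpow T ((i-1+n)+1) x)" by (rule Tpow_pred[OF assms])
  also have "(i-1+n)+1 = i+n" by simp
  also have "the_inv T (Tpow T (i+n) x) = the_inv T (Tpow T i (Tpow T n x))" using step2 by simp
  also have "\<dots> = Tpow T (i-1) (Tpow T n x)" using Tpow_pred[OF assms, of "i-1"] by simp
  finally show ?case .
qed

lemma Tpow_isometry:
  assumes "bij T" and iso: "\<And>x y. dist (T x) (T y) = dist x y"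
  shows "dist (Tpow T n x) (Tpow T n y) = dist (x::'x::metric_space) y"
proof -
  have iso2: "dist (the_inv T x) (the_inv T y) = dist x y" for x y
  proof -
    have "T (the_inv T w) = w" for w
      using assms by (metis bij_def f_the_inv_into_f iso_tuple_UNIV_I rangeI surj_def)
    then show ?thesis using iso[of "the_inv T x" "the_inv T y"] by simp
  qed
  have "dist ((F ^^ k) x) ((F ^^ k) y) = dist x y" if "\<And>x y. dist (F x) (F y) = dist x y" for F :: "'x \<Rightarrow> 'x" and k
    by (induction k) (simp_all add: that)
  then show ?thesis using iso iso2 by (simp add: Tpow_def)
qed

lemma Tpow_cont:
  assumes "bij T" and iso: "\<And>x y. dist (T x) (T y) = dist x y"
  shows "continuous_on UNIV (Tpow T n :: 'x::metric_space \<Rightarrow> 'x)"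
  unfolding continuous_on_iff using Tpow_isometry[OF assms] by metis

context
  fixes G :: "'g monoid"
  assumes grp: "group G" and carr: "carrier G = UNIV"
begin

interpretation G: group G by (rule grp)

lemma cn_shift:
  "cocycle_nat G T f (Suc k) y = cocycle_nat G T f k (T y) \<otimes>\<^bsub>G\<^esub> f y"
proof (induction k)
  case 0 then show ?case by (simp add: carr)
next
  case (Suc k)
  have e: "(T ^^ Suc k) y = (T ^^ k) (T y)" by (simp add: funpow_Suc_right del: funpow.simps)
  show ?case
    by (subst cocycle_nat.simps, subst Suc, simp only: e) (simp add: carr G.m_assoc)
qed

lemma C0[simp]: "cocycle G T f 0 x = \<one>\<^bsub>G\<^esub>"
  by (simp add: cocycle_def)

lemma C_step:
  assumes "bij T"
  shows "cocycle G T f (n+1) x = f (Tpow T n x) \<otimes>\<^bsub>G\<^esub> cocycle G T f n x"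
proof (cases "0 \<le> n")
  case True
  then have "nat (n+1) = Suc (nat n)" by simp
  then show ?thesis using True by (simp add: Tpow_def cocycle_def)
next
  case False
  define j where "j = nat (-(n+1))"
  have nj: "nat (-n) = Suc j" using False by (simp add: j_def)
  define y where "y = Tpow T n x"
  have Ty: "T y = Tpow T (n+1) x" using Tpow_succ[OF assms] y_def by simp
  have A0: "cocycle G T f n x = inv\<^bsub>G\<^esub> (cocycle_nat G T f (Suc j) y)"
    using False nj by (simp add: cocycle_def y_def del: cocycle_nat.simps)
  have A: "cocycle G T f n x = inv\<^bsub>G\<^esub> (f y) \<otimes>\<^bsub>G\<^esub> inv\<^bsub>G\<^esub> (cocycle_nat G T f j (T y))"
    unfolding A0 cn_shift by (simp add: G.inv_mult_group carr)
  have B: "cocycle G T f (n+1) x = inv\<^bsub>G\<^esub> (cocycle_nat G T f j (T y))"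
  proof (cases "n+1 = 0")
    case True then show ?thesis by (simp add: j_def cocycle_def)
  next
    case False2: False
    with False have "\<not> 0 \<le> n+1" by simp
    then show ?thesis by (simp add: cocycle_def j_def Ty)
  qed
  show ?thesis unfolding A B y_def[symmetric]
    by (simp add: carr G.m_assoc[symmetric])
qed

lemma C_add:
  assumes "bij T"
  shows "cocycle G T f (m+n) x = cocycle G T f m (Tpow T n x) \<otimes>\<^bsub>G\<^esub> cocycle G T f n x"
proof (induction m rule: int_induct[where k=0])
  case base then show ?case by (simp add: carr)
next
  case (step1 i)
  have "cocycle G T f (i+1+n) x = cocycle G T f ((i+n)+1) x" by (simp add: algebra_simps)
  also have "\<dots> = f (Tpow T (i+n) x) \<otimes>\<^bsub>G\<^esub> cocycle G T f (i+n) x" by (rule C_step[OF assms])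
  also have "\<dots> = cocycle G T f (i+1) (Tpow T n x) \<otimes>\<^bsub>G\<^esub> cocycle G T f n x"
    using step1 C_step[OF assms, where n=i and x="Tpow T n x"] Tpow_add[OF assms]
    by (simp add: carr G.m_assoc)
  finally show ?case .
next
  case (step2 i)
  have e1: "cocycle G T f (i+n) x = f (Tpow T (i-1+n) x) \<otimes>\<^bsub>G\<^esub> cocycle G T f (i-1+n) x"
    using C_step[OF assms, where n="i-1+n" and x=x] by simp
  have e2: "cocycle G T f i w = f (Tpow T (i-1) w) \<otimes>\<^bsub>G\<^esub> cocycle G T f (i-1) w" for w
    using C_step[OF assms, where n="i-1" and x=w] by simp
  have "cocycle G T f (i-1+n) x = inv\<^bsub>G\<^esub> f (Tpow T (i-1+n) x) \<otimes>\<^bsub>G\<^esub> cocycle G T f (i+n) x"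
    using e1 by (simp add: carr G.inv_solve_left)
  also have "\<dots> = cocycle G T f (i-1) (Tpow T n x) \<otimes>\<^bsub>G\<^esub> cocycle G T f n x"
    using step2 e2[of "Tpow T n x"] Tpow_add[OF assms, of "i-1" n x]
    by (simp add: carr G.m_assoc[symmetric] G.inv_solve_left)
  finally show ?case .
qed

end



context
  fixes G :: "('g::topological_space) monoid"
  assumes tg: "topological_group G"
begin

lemma grp: "group G" and carr: "carrier G = UNIV"
  and mcont: "continuous_on UNIV (\<lambda>p::'g \<times> 'g. fst p \<otimes>\<^bsub>G\<^esub> snd p)"
  and icont: "continuous_on UNIV (\<lambda>x. inv\<^bsub>G\<^esub> x)"
  using tg by (auto simp: topological_group_def)

interpretation G: group G by (rule grp)

lemma open_vimage_UNIV: "continuous_on UNIV F \<Longrightarrow> open B \<Longrightarrow> open (F -` B)"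
  using continuous_on_open_vimage[of UNIV F] by auto

lemma mult_nbhd_ex:
  assumes "open Q" "a \<otimes>\<^bsub>G\<^esub> b \<in> Q"
  shows "\<exists>A B. open A \<and> open B \<and> a \<in> A \<and> b \<in> B \<and> (\<forall>x\<in>A. \<forall>y\<in>B. x \<otimes>\<^bsub>G\<^esub> y \<in> Q)"
proof -
  have "open ((\<lambda>p::'g \<times> 'g. fst p \<otimes>\<^bsub>G\<^esub> snd p) -` Q)"
    by (rule open_vimage_UNIV[OF mcont assms(1)])
  moreover have "(a, b) \<in> (\<lambda>p::'g \<times> 'g. fst p \<otimes>\<^bsub>G\<^esub> snd p) -` Q" using assms by simp
  ultimately obtain A B where "open A" "open B" "(a,b) \<in> A \<times> B"
     "A \<times> B \<subseteq> (\<lambda>p::'g \<times> 'g. fst p \<otimes>\<^bsub>G\<^esub> snd p) -` Q"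
    by (rule open_prod_elim)
  moreover have "\<forall>x\<in>A. \<forall>y\<in>B. x \<otimes>\<^bsub>G\<^esub> y \<in> Q"
  proof (intro ballI)
    fix x y assume "x \<in> A" "y \<in> B"
    then have "(x, y) \<in> A \<times> B" by simp
    then show "x \<otimes>\<^bsub>G\<^esub> y \<in> Q" using calculation(4) by auto
  qed
  ultimately show ?thesis by blast
qed

lemma div_nbhd_ex:
  assumes "open Q" "a \<otimes>\<^bsub>G\<^esub> inv\<^bsub>G\<^esub> b \<in> Q"
  shows "\<exists>A B. open A \<and> open B \<and> a \<in> A \<and> b \<in> B \<and> (\<forall>x\<in>A. \<forall>y\<in>B. x \<otimes>\<^bsub>G\<^esub> inv\<^bsub>G\<^esub> y \<in> Q)"
proof -
  obtain A B where AB: "open A" "open B" "a \<in> A" "inv\<^bsub>G\<^esub> b \<in> B" "\<forall>x\<in>A. \<forall>y\<in>B. x \<otimes>\<^bsub>G\<^esub> y \<in> Q"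
    using mult_nbhd_ex[OF assms] by blast
  have "open ((\<lambda>x. inv\<^bsub>G\<^esub> x) -` B)" by (rule open_vimage_UNIV[OF icont AB(2)])
  moreover have "\<forall>x\<in>A. \<forall>y\<in>(\<lambda>x. inv\<^bsub>G\<^esub> x) -` B. x \<otimes>\<^bsub>G\<^esub> inv\<^bsub>G\<^esub> y \<in> Q"
    using AB(5) by simp
  ultimately show ?thesis using AB(1,3,4) by blast
qed

lemma open_conj: "open B \<Longrightarrow> open {g. g \<otimes>\<^bsub>G\<^esub> h \<otimes>\<^bsub>G\<^esub> inv\<^bsub>G\<^esub> g \<in> B}"
proof (subst open_subopen, intro ballI)
  fix g assume B: "open B" and g: "g \<in> {g. g \<otimes>\<^bsub>G\<^esub> h \<otimes>\<^bsub>G\<^esub> inv\<^bsub>G\<^esub> g \<in> B}"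
  obtain A1 B1 where 1: "open A1" "open B1" "g \<otimes>\<^bsub>G\<^esub> h \<in> A1" "inv\<^bsub>G\<^esub> g \<in> B1"
      "\<forall>x\<in>A1. \<forall>y\<in>B1. x \<otimes>\<^bsub>G\<^esub> y \<in> B"
    using mult_nbhd_ex[OF B g[simplified]] by blast
  obtain A2 B2 where 2: "open A2" "open B2" "g \<in> A2" "h \<in> B2"
      "\<forall>x\<in>A2. \<forall>y\<in>B2. x \<otimes>\<^bsub>G\<^esub> y \<in> A1"
    using mult_nbhd_ex[OF 1(1,3)] by blast
  have 3: "open ((\<lambda>x. inv\<^bsub>G\<^esub> x) -` B1)" by (rule open_vimage_UNIV[OF icont 1(2)])
  show "\<exists>T. open T \<and> g \<in> T \<and> T \<subseteq> {g. g \<otimes>\<^bsub>G\<^esub> h \<otimes>\<^bsub>G\<^esub> inv\<^bsub>G\<^esub> g \<in> B}"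
  proof (intro exI[of _ "A2 \<inter> (\<lambda>x. inv\<^bsub>G\<^esub> x) -` B1"] conjI subsetI)
    show "open (A2 \<inter> (\<lambda>x. inv\<^bsub>G\<^esub> x) -` B1)" using 2(1) 3 by (rule open_Int)
    show "g \<in> A2 \<inter> (\<lambda>x. inv\<^bsub>G\<^esub> x) -` B1" using 2(3) 1(4) by simp
    fix x assume x: "x \<in> A2 \<inter> (\<lambda>x. inv\<^bsub>G\<^esub> x) -` B1"
    then have "x \<otimes>\<^bsub>G\<^esub> h \<in> A1" using 2(4,5) by blast
    moreover have "inv\<^bsub>G\<^esub> x \<in> B1" using x by simp
    ultimately have "x \<otimes>\<^bsub>G\<^esub> h \<otimes>\<^bsub>G\<^esub> inv\<^bsub>G\<^esub> x \<in> B" using 1(5) by blast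
    then show "x \<in> {g. g \<otimes>\<^bsub>G\<^esub> h \<otimes>\<^bsub>G\<^esub> inv\<^bsub>G\<^esub> g \<in> B}" by simp
  qed
qed

lemma cont_mult_fun:
  assumes "continuous_on UNIV F" "continuous_on UNIV K"
  shows "continuous_on UNIV (\<lambda>x. F x \<otimes>\<^bsub>G\<^esub> K x)"
  using continuous_on_compose2[OF mcont continuous_on_Pair[OF assms]] by simp

lemma cont_inv_fun:
  assumes "continuous_on UNIV F"
  shows "continuous_on UNIV (\<lambda>x. inv\<^bsub>G\<^esub> F x)"
  using continuous_on_compose2[OF icont assms] by simp

lemma C_cont:
  fixes T :: "'x::metric_space \<Rightarrow> 'x"
  assumes bT: "bij T" and iso: "\<And>x y. dist (T x) (T y) = dist x y"
    and fc: "continuous_on UNIV f"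
  shows "continuous_on UNIV (cocycle G T f n)"
proof (induction n rule: int_induct[where k=0])
  case base
  have "cocycle G T f 0 = (\<lambda>_. \<one>\<^bsub>G\<^esub>)" by (rule ext) (simp add: C0[OF grp carr])
  then show ?case by simp
next
  case (step1 i)
  have fT: "continuous_on UNIV (\<lambda>x. f (Tpow T i x))"
    using continuous_on_compose2[OF fc Tpow_cont[OF bT iso]] by simp
  show ?case using cont_mult_fun[OF fT step1(2)] C_step[OF grp carr bT] by simp
next
  case (step2 i)
  have fT: "continuous_on UNIV (\<lambda>x. f (Tpow T (i-1) x))"
    using continuous_on_compose2[OF fc Tpow_cont[OF bT iso]] by simp
  have e: "cocycle G T f (i-1) x = inv\<^bsub>G\<^esub> f (Tpow T (i-1) x) \<otimes>\<^bsub>G\<^esub> cocycle G T f i x" for x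
    using C_step[OF grp carr bT, where n="i-1" and x=x and f=f] by (simp add: carr G.inv_solve_left)
  show ?case using cont_mult_fun[OF cont_inv_fun[OF fT] step2(2)] e by simp
qed

lemma essE: "g \<in> ess_range G T f x \<Longrightarrow> open Q \<Longrightarrow> g \<in> Q \<Longrightarrow> open W \<Longrightarrow> x \<in> W \<Longrightarrow>
  \<exists>n::int. n \<noteq> 0 \<and> (\<exists>y. y \<in> W \<and> Tpow T n y \<in> W \<and> cocycle G T f n y \<in> Q)"
  unfolding ess_range_def by blast

lemma lemmaA:
  fixes T :: "'x::metric_space \<Rightarrow> 'x"
  assumes bT: "bij T" and iso: "\<And>x y. dist (T x) (T y) = dist x y"
    and fc: "continuous_on UNIV f"
    and h: "h \<in> ess_range G T f y" and Q: "open Q" "cocycle G T f n y \<otimes>\<^bsub>G\<^esub> h \<in> Q"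
    and e: "\<epsilon> > 0"
  shows "\<exists>N x. dist x y < \<epsilon> \<and> dist (Tpow T N x) (Tpow T n y) < \<epsilon> \<and> cocycle G T f N x \<in> Q"
proof -
  obtain A B where AB: "open A" "open B" "cocycle G T f n y \<in> A" "h \<in> B"
     "\<forall>x\<in>A. \<forall>y\<in>B. x \<otimes>\<^bsub>G\<^esub> y \<in> Q"
    using mult_nbhd_ex[OF Q] by blast
  have op: "open (cocycle G T f n -` A)" by (rule open_vimage_UNIV[OF C_cont[OF bT iso fc] AB(1)])
  have yin: "y \<in> cocycle G T f n -` A" using AB(3) by simp
  have "\<exists>d>0. ball y d \<subseteq> cocycle G T f n -` A" using open_contains_ball_eq[OF op, of y] yin by simp
  then obtain d where d0: "d > 0" "ball y d \<subseteq> cocycle G T f n -` A" by blast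
  have d2: "cocycle G T f n w \<in> A" if "dist w y < d" for w
  proof -
    have "w \<in> ball y d" using that by (simp add: dist_commute)
    then show ?thesis using d0(2) by blast
  qed
  note d = d0(1) d2
  define d' where "d' = min d \<epsilon>"
  have "d' > 0" using d e by (simp add: d'_def)
  then obtain m w where mw: "m \<noteq> 0" "w \<in> ball y d'" "Tpow T m w \<in> ball y d'" "cocycle G T f m w \<in> B"
    using essE[OF h AB(2,4) open_ball centre_in_ball[THEN iffD2]] by blast
  have "cocycle G T f (n+m) w = cocycle G T f n (Tpow T m w) \<otimes>\<^bsub>G\<^esub> cocycle G T f m w"
    by (rule C_add[OF grp carr bT])
  moreover have "cocycle G T f n (Tpow T m w) \<in> A"
    using mw(3) d(2) by (simp add: d'_def dist_commute)
  ultimately have 1: "cocycle G T f (n+m) w \<in> Q" using AB(5) mw(4) by auto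
  have "dist (Tpow T (n+m) w) (Tpow T n y) = dist (Tpow T m w) y"
    using Tpow_add[OF bT] Tpow_isometry[OF bT iso] by simp
  then show ?thesis using 1 mw(2,3) by (intro exI[of _ "n+m"] exI[of _ w]) (auto simp: d'_def dist_commute)
qed

lemma inv_cancel_l: "inv\<^bsub>G\<^esub> c \<otimes>\<^bsub>G\<^esub> (c \<otimes>\<^bsub>G\<^esub> y) = y"
  by (simp add: carr G.m_assoc[symmetric])

lemma conj_mem: "x \<in> conj_sub G g H \<longleftrightarrow> (\<exists>h\<in>H. x = g \<otimes>\<^bsub>G\<^esub> h \<otimes>\<^bsub>G\<^esub> inv\<^bsub>G\<^esub> g)"
  unfolding conj_sub_def l_coset_def r_coset_def by auto

lemma LSC:
  assumes S: "continuous_into_conjugates G H S" and k: "k \<in> S y" "k \<in> B" and B: "open B"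
  shows "\<exists>V. open V \<and> y \<in> V \<and> (\<forall>x\<in>V. S x \<inter> B \<noteq> {})"
proof -
  have eq: "{g. conj_sub G g H \<in> {K. K \<inter> B \<noteq> {}}} = (\<Union>h\<in>H. {g. g \<otimes>\<^bsub>G\<^esub> h \<otimes>\<^bsub>G\<^esub> inv\<^bsub>G\<^esub> g \<in> B})"
    by (auto simp: conj_mem disjoint_iff)
  have "open (\<Union>h\<in>H. {g. g \<otimes>\<^bsub>G\<^esub> h \<otimes>\<^bsub>G\<^esub> inv\<^bsub>G\<^esub> g \<in> B})"
    by (rule open_UN) (simp add: open_conj[OF B])
  then have o1: "open {g. conj_sub G g H \<in> {K. K \<inter> B \<noteq> {}}}" by (simp only: eq)
  have all: "\<forall>V. open {g. conj_sub G g H \<in> V} \<longrightarrow> open {y. S y \<in> V}"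
    using S unfolding continuous_into_conjugates_def by (rule conjunct2)
  have "open {y. S y \<in> {K. K \<inter> B \<noteq> {}}}" using all[rule_format, OF o1] .
  then show ?thesis using k by (intro exI[of _ "{y. S y \<in> {K. K \<inter> B \<noteq> {}}}"]) auto
qed

lemma S_subgroup:
  assumes S: "continuous_into_conjugates G H S" and H: "subgroup H G"
  shows "\<one>\<^bsub>G\<^esub> \<in> S y" "a \<in> S y \<Longrightarrow> b \<in> S y \<Longrightarrow> a \<otimes>\<^bsub>G\<^esub> inv\<^bsub>G\<^esub> b \<in> S y"
proof -
  obtain c where c: "S y = conj_sub G c H"
    using S unfolding continuous_into_conjugates_def conjugates_def by blast
  show "\<one>\<^bsub>G\<^esub> \<in> S y" unfolding c conj_mem
    using subgroup.one_closed[OF H] by (intro bexI[of _ "\<one>\<^bsub>G\<^esub>"]) (auto simp: carr)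
  assume "a \<in> S y" "b \<in> S y"
  then obtain p q where pq: "p \<in> H" "q \<in> H" "a = c \<otimes>\<^bsub>G\<^esub> p \<otimes>\<^bsub>G\<^esub> inv\<^bsub>G\<^esub> c"
     "b = c \<otimes>\<^bsub>G\<^esub> q \<otimes>\<^bsub>G\<^esub> inv\<^bsub>G\<^esub> c" unfolding c conj_mem by blast
  have "a \<otimes>\<^bsub>G\<^esub> inv\<^bsub>G\<^esub> b = c \<otimes>\<^bsub>G\<^esub> (p \<otimes>\<^bsub>G\<^esub> inv\<^bsub>G\<^esub> q) \<otimes>\<^bsub>G\<^esub> inv\<^bsub>G\<^esub> c"
    unfolding pq by (simp add: carr G.m_assoc G.inv_mult_group inv_cancel_l)
  moreover have "p \<otimes>\<^bsub>G\<^esub> inv\<^bsub>G\<^esub> q \<in> H"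
    using H pq by (simp add: subgroup.m_closed subgroup.m_inv_closed)
  ultimately show "a \<otimes>\<^bsub>G\<^esub> inv\<^bsub>G\<^esub> b \<in> S y" unfolding c conj_mem by blast
qed

end

theorem lemma4p1:
  fixes X :: "('x::metric_space) monoid"
    and T :: "'x \<Rightarrow> 'x"
    and G :: "('g::{t2_space, second_countable_topology}) monoid"
    and f :: "'x \<Rightarrow> 'g"
    and H :: "'g set"
    and S :: "'x \<Rightarrow> 'g set"
    and U :: "'g set"
    and z :: 'x
  assumes X_group: "topological_group X"
    and X_compact: "compact (UNIV :: 'x set)"
    and X_loc_conn: "locally connected (UNIV :: 'x set)"
    and dist_invariant: "\<forall>a x y. dist (a \<otimes>\<^bsub>X\<^esub> x) (a \<otimes>\<^bsub>X\<^esub> y) = dist x y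
                               \<and> dist (x \<otimes>\<^bsub>X\<^esub> a) (y \<otimes>\<^bsub>X\<^esub> a) = dist x y"
    and T_min: "minimal_rotation X T"
    and G_group: "topological_group G"
    and G_loc_compact: "locally compact (UNIV :: 'g set)"
    and f_cont: "continuous_on UNIV f"
    and H_sub: "subgroup H G"
    and H_closed: "closed H"
    and S_sel: "consistent_selection G T f H S"
    and U_open: "open U"
    and U_one: "\<one>\<^bsub>G\<^esub> \<in> U"
    and U_relcpt: "compact (closure U)"
    and U_z: "ess_range G T f z \<inter> ((closure U <#>\<^bsub>G\<^esub> S z) - (U <#>\<^bsub>G\<^esub> S z)) = {}"
  shows "(\<exists>\<epsilon>>0. \<forall>y (n::int). dist y z < \<epsilon> \<and> dist (Tpow T n y) z < \<epsilon> \<longrightarrow>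
            ((cocycle G T f n y <#\<^bsub>G\<^esub> S y) \<inter> (U <#>\<^bsub>G\<^esub> S y) \<noteq> {}
             \<or> (cocycle G T f n y <#\<^bsub>G\<^esub> S y) \<inter> (closure U <#>\<^bsub>G\<^esub> S y) = {}))
      \<and> (\<forall>y. \<forall>g \<in> ess_range G T f y. g <#\<^bsub>G\<^esub> S y \<subseteq> ess_range G T f y)"
proof -
  have grp: "group G" and carr: "carrier G = UNIV" using G_group by (auto simp: topological_group_def)
  interpret G: group G by (rule grp)
  obtain a where a: "a \<in> carrier X" "T = (\<lambda>x. a \<otimes>\<^bsub>X\<^esub> x)"
    using T_min unfolding minimal_rotation_def by blast
  have gX: "group X" "carrier X = UNIV" using X_group by (auto simp: topological_group_def)
  interpret XG: group X by (rule gX(1))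
  have iso: "\<And>x y. dist (T x) (T y) = dist x y" using dist_invariant a by simp
  have bT: "bij T"
  proof (rule bijI)
    show "inj T" unfolding a(2) by (rule injI) (simp add: gX(2))
    show "surj T"
    proof (rule surjI[of T "\<lambda>x. inv\<^bsub>X\<^esub> a \<otimes>\<^bsub>X\<^esub> x"])
      fix x show "T (inv\<^bsub>X\<^esub> a \<otimes>\<^bsub>X\<^esub> x) = x" unfolding a(2) by (simp add: gX(2) XG.m_assoc[symmetric])
    qed
  qed
  have Scont: "continuous_into_conjugates G H S" and Sess: "\<And>x. S x \<subseteq> ess_range G T f x"
    using S_sel unfolding consistent_selection_def by auto
  have S1: "\<one>\<^bsub>G\<^esub> \<in> S y" for y using S_subgroup(1)[OF G_group Scont H_sub] .
  have S2: "p \<in> S y \<Longrightarrow> q \<in> S y \<Longrightarrow> p \<otimes>\<^bsub>G\<^esub> inv\<^bsub>G\<^esub> q \<in> S y" for p q y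
    using S_subgroup(2)[OF G_group Scont H_sub] by blast
  have C0': "cocycle G T f 0 x = \<one>\<^bsub>G\<^esub>" for x using C0[OF grp carr] .

  have part2: "\<forall>y. \<forall>g \<in> ess_range G T f y. g <#\<^bsub>G\<^esub> S y \<subseteq> ess_range G T f y"
  proof (intro allI ballI subsetI)
    fix y g x assume g: "g \<in> ess_range G T f y" and x: "x \<in> g <#\<^bsub>G\<^esub> S y"
    obtain h where h: "h \<in> S y" "x = g \<otimes>\<^bsub>G\<^esub> h" using x unfolding l_coset_def by blast
    show "x \<in> ess_range G T f y"
    proof (cases "x = \<one>\<^bsub>G\<^esub>")
      case True
      then have "x \<in> S y" using S1 by simp
      then show ?thesis using Sess by blast
    next
      case False
      show ?thesis unfolding ess_range_def
      proof (intro CollectI allI impI)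
        fix Q W assume Q: "open Q" "x \<in> Q" and W: "open W" "y \<in> W"
        define Q' where "Q' = Q - {\<one>\<^bsub>G\<^esub>}"
        have Q': "open Q'" "x \<in> Q'" "\<one>\<^bsub>G\<^esub> \<notin> Q'" "Q' \<subseteq> Q"
          using Q False by (auto simp: Q'_def intro!: open_Diff)
        have ghQ: "g \<otimes>\<^bsub>G\<^esub> h \<in> Q'" using Q'(2) h(2) by simp
        obtain A B where AB: "open A" "open B" "g \<in> A" "h \<in> B"
            "\<forall>p\<in>A. \<forall>q\<in>B. p \<otimes>\<^bsub>G\<^esub> q \<in> Q'"
          using mult_nbhd_ex[OF G_group Q'(1) ghQ] by blast
        obtain V where V: "open V" "y \<in> V" "\<forall>x\<in>V. S x \<inter> B \<noteq> {}"
          using LSC[OF G_group Scont h(1) AB(4,2)] by blast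
        have "open (W \<inter> V)" "y \<in> W \<inter> V" using W V by auto
        then obtain n x1 where nx: "n \<noteq> 0" "x1 \<in> W \<inter> V" "Tpow T n x1 \<in> W \<inter> V" "cocycle G T f n x1 \<in> A"
          using essE[OF G_group g AB(1,3) \<open>open (W \<inter> V)\<close> \<open>y \<in> W \<inter> V\<close>] by blast
        obtain h' where h': "h' \<in> S x1" "h' \<in> B" using V(3) nx(2) by blast
        have inQ: "cocycle G T f n x1 \<otimes>\<^bsub>G\<^esub> h' \<in> Q'" using AB(5) nx(4) h'(2) by blast
        have h'E: "h' \<in> ess_range G T f x1" using Sess h'(1) by blast
        obtain e1 where e1: "e1 > 0" "ball x1 e1 \<subseteq> W" using open_contains_ball_eq[OF W(1)] nx(2) by blast
        obtain e2 where e2: "e2 > 0" "ball (Tpow T n x1) e2 \<subseteq> W" using open_contains_ball_eq[OF W(1)] nx(3) by blast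
        have "min e1 e2 > 0" using e1 e2 by simp
        from lemmaA[OF G_group bT iso f_cont h'E Q'(1) inQ this]
        obtain N x' where N: "dist x' x1 < min e1 e2" "dist (Tpow T N x') (Tpow T n x1) < min e1 e2"
            "cocycle G T f N x' \<in> Q'" by blast
        have "N \<noteq> 0" using N(3) Q'(3) C0' by auto
        moreover have "x' \<in> W" using N(1) e1(2) by (auto simp: dist_commute)
        moreover have "Tpow T N x' \<in> W" using N(2) e2(2) by (auto simp: dist_commute)
        ultimately show "\<exists>n::int. n \<noteq> 0 \<and> (\<exists>y. y \<in> W \<and> Tpow T n y \<in> W \<and> cocycle G T f n y \<in> Q)"
          using N(3) Q'(4) by blast
      qed
    qed
  qed

  define good where "good u Q e \<longleftrightarrow> open Q \<and> u \<in> Q \<and> e > 0 \<and>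
     (\<forall>y n u'. dist y z < e \<and> dist (Tpow T n y) z < e \<and> u' \<in> Q \<and> u' \<in> cocycle G T f n y <#\<^bsub>G\<^esub> S y
        \<longrightarrow> u' \<in> U <#>\<^bsub>G\<^esub> S y)" for u Q and e :: real
  have ex_good: "\<exists>Q e. good u Q e" if u: "u \<in> closure U" for u
  proof (cases "u \<in> U <#>\<^bsub>G\<^esub> S z")
    case True
    then obtain v k where vk: "v \<in> U" "k \<in> S z" "u = v \<otimes>\<^bsub>G\<^esub> k" unfolding set_mult_def by auto
    have ukU: "u \<otimes>\<^bsub>G\<^esub> inv\<^bsub>G\<^esub> k \<in> U" using vk by (simp add: carr G.m_assoc)
    obtain A B where AB: "open A" "open B" "u \<in> A" "k \<in> B"
        "\<forall>p\<in>A. \<forall>q\<in>B. p \<otimes>\<^bsub>G\<^esub> inv\<^bsub>G\<^esub> q \<in> U"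
      using div_nbhd_ex[OF G_group U_open ukU] by blast
    obtain V where V: "open V" "z \<in> V" "\<forall>x\<in>V. S x \<inter> B \<noteq> {}"
      using LSC[OF G_group Scont vk(2) AB(4,2)] by blast
    obtain e where e: "e > 0" "ball z e \<subseteq> V" using open_contains_ball_eq[OF V(1)] V(2) by blast
    have "good u A e" unfolding good_def
    proof (intro conjI allI impI)
      fix y n u' assume Hy: "dist y z < e \<and> dist (Tpow T n y) z < e \<and> u' \<in> A \<and> u' \<in> cocycle G T f n y <#\<^bsub>G\<^esub> S y"
      then have "y \<in> V" using e by (auto simp: dist_commute)
      then obtain k' where k': "k' \<in> S y" "k' \<in> B" using V(3) by blast
      have "u' \<otimes>\<^bsub>G\<^esub> inv\<^bsub>G\<^esub> k' \<in> U" using AB(5) Hy k' by blast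
      moreover have "u' = (u' \<otimes>\<^bsub>G\<^esub> inv\<^bsub>G\<^esub> k') \<otimes>\<^bsub>G\<^esub> k'" by (simp add: carr G.m_assoc)
      ultimately show "u' \<in> U <#>\<^bsub>G\<^esub> S y" unfolding set_mult_def using k'(1) by blast
    qed (use AB e in auto)
    then show ?thesis by blast
  next
    case False
    have "u = u \<otimes>\<^bsub>G\<^esub> \<one>\<^bsub>G\<^esub>" by (simp add: carr)
    then have "u \<in> closure U <#>\<^bsub>G\<^esub> S z" unfolding set_mult_def using u S1 by blast
    then have "u \<notin> ess_range G T f z" using U_z False by blast
    then obtain Q W where QW: "open Q" "u \<in> Q" "open W" "z \<in> W"
      and no: "\<not> (\<exists>n::int. n \<noteq> 0 \<and> (\<exists>y. y \<in> W \<and> Tpow T n y \<in> W \<and> cocycle G T f n y \<in> Q))"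
      unfolding ess_range_def by auto
    have "\<one>\<^bsub>G\<^esub> = \<one>\<^bsub>G\<^esub> \<otimes>\<^bsub>G\<^esub> \<one>\<^bsub>G\<^esub>" by simp
    then have "\<one>\<^bsub>G\<^esub> \<in> U <#>\<^bsub>G\<^esub> S z" unfolding set_mult_def using U_one S1 by blast
    then have u1: "u \<noteq> \<one>\<^bsub>G\<^esub>" using False by auto
    define Q' where "Q' = Q - {\<one>\<^bsub>G\<^esub>}"
    have Q': "open Q'" "u \<in> Q'" "\<one>\<^bsub>G\<^esub> \<notin> Q'" "Q' \<subseteq> Q"
      using QW u1 by (auto simp: Q'_def intro!: open_Diff)
    obtain e0 where e0: "e0 > 0" "ball z e0 \<subseteq> W" using open_contains_ball_eq[OF QW(3)] QW(4) by blast
    have "good u Q' (e0/2)" unfolding good_def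
    proof (intro conjI allI impI)
      fix y n u' assume Hy: "dist y z < e0/2 \<and> dist (Tpow T n y) z < e0/2 \<and> u' \<in> Q' \<and> u' \<in> cocycle G T f n y <#\<^bsub>G\<^esub> S y"
      then obtain h where h: "h \<in> S y" "u' = cocycle G T f n y \<otimes>\<^bsub>G\<^esub> h" unfolding l_coset_def by auto
      have hE: "h \<in> ess_range G T f y" using h(1) Sess by blast
      have inQ: "cocycle G T f n y \<otimes>\<^bsub>G\<^esub> h \<in> Q'" using Hy h(2) by simp
      have "e0/2 > 0" using e0 by simp
      from lemmaA[OF G_group bT iso f_cont hE Q'(1) inQ this]
      obtain N x where N: "dist x y < e0/2" "dist (Tpow T N x) (Tpow T n y) < e0/2"
          "cocycle G T f N x \<in> Q'" by blast
      have "N \<noteq> 0" using N(3) Q'(3) C0' by auto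
      moreover have "x \<in> W"
      proof -
        have "dist x z \<le> dist x y + dist y z" by (rule dist_triangle)
        then have "dist z x < e0" using N(1) Hy by (simp add: dist_commute)
        then show ?thesis using e0(2) by auto
      qed
      moreover have "Tpow T N x \<in> W"
      proof -
        have "dist (Tpow T N x) z \<le> dist (Tpow T N x) (Tpow T n y) + dist (Tpow T n y) z" by (rule dist_triangle)
        then have "dist z (Tpow T N x) < e0" using N(2) Hy by (simp add: dist_commute)
        then show ?thesis using e0(2) by auto
      qed
      ultimately have False using no N(3) Q'(4) by blast
      then show "u' \<in> U <#>\<^bsub>G\<^esub> S y" ..
    qed (use Q' e0 in auto)
    then show ?thesis by blast
  qed
  have "\<forall>u\<in>closure U. \<exists>Q e. good u Q e" using ex_good by blast
  from bchoice[OF this] obtain Qf where "\<forall>u\<in>closure U. \<exists>e. good u (Qf u) e" ..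
  from bchoice[OF this] obtain ef where gd0: "\<forall>u\<in>closure U. good u (Qf u) (ef u)" ..
  have gd: "\<And>u. u \<in> closure U \<Longrightarrow> good u (Qf u) (ef u)" using gd0 by blast
  have cov: "closure U \<subseteq> (\<Union>u\<in>closure U. Qf u)" using gd unfolding good_def by blast
  have opn: "\<And>u. u \<in> closure U \<Longrightarrow> open (Qf u)" using gd unfolding good_def by blast
  obtain C' where C': "C' \<subseteq> closure U" "finite C'" "closure U \<subseteq> (\<Union>u\<in>C'. Qf u)"
    using compactE_image[OF U_relcpt opn cov] by blast
  define \<epsilon> where "\<epsilon> = Min (insert 1 (ef ` C'))"
  have fin: "finite (insert 1 (ef ` C'))" using C'(2) by simp
  have epos: "\<epsilon> > 0" unfolding \<epsilon>_def
    using fin C'(1) gd unfolding good_def by (subst Min_gr_iff) auto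
  have ele: "\<epsilon> \<le> ef u" if "u \<in> C'" for u unfolding \<epsilon>_def using fin that by (intro Min_le) auto
  have part1: "\<exists>\<epsilon>>0. \<forall>y (n::int). dist y z < \<epsilon> \<and> dist (Tpow T n y) z < \<epsilon> \<longrightarrow>
            ((cocycle G T f n y <#\<^bsub>G\<^esub> S y) \<inter> (U <#>\<^bsub>G\<^esub> S y) \<noteq> {}
             \<or> (cocycle G T f n y <#\<^bsub>G\<^esub> S y) \<inter> (closure U <#>\<^bsub>G\<^esub> S y) = {})"
  proof (intro exI[of _ \<epsilon>] conjI allI impI epos)
    fix y n assume d: "dist y z < \<epsilon> \<and> dist (Tpow T n y) z < \<epsilon>"
    show "(cocycle G T f n y <#\<^bsub>G\<^esub> S y) \<inter> (U <#>\<^bsub>G\<^esub> S y) \<noteq> {}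
             \<or> (cocycle G T f n y <#\<^bsub>G\<^esub> S y) \<inter> (closure U <#>\<^bsub>G\<^esub> S y) = {}"
    proof (rule ccontr)
      assume "\<not> ?thesis"
      then have dis: "(cocycle G T f n y <#\<^bsub>G\<^esub> S y) \<inter> (U <#>\<^bsub>G\<^esub> S y) = {}"
        and "\<exists>c. c \<in> cocycle G T f n y <#\<^bsub>G\<^esub> S y \<and> c \<in> closure U <#>\<^bsub>G\<^esub> S y" by auto
      then obtain c h1 u h2 where ch: "h1 \<in> S y" "c = cocycle G T f n y \<otimes>\<^bsub>G\<^esub> h1" "u \<in> closure U" "h2 \<in> S y"
          "c = u \<otimes>\<^bsub>G\<^esub> h2" unfolding l_coset_def set_mult_def by auto
      have "u = c \<otimes>\<^bsub>G\<^esub> inv\<^bsub>G\<^esub> h2" using ch(5) by (simp add: carr G.inv_solve_right)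
      also have "\<dots> = cocycle G T f n y \<otimes>\<^bsub>G\<^esub> (h1 \<otimes>\<^bsub>G\<^esub> inv\<^bsub>G\<^esub> h2)" using ch(2) by (simp add: carr G.m_assoc)
      finally have "u \<in> cocycle G T f n y <#\<^bsub>G\<^esub> S y" unfolding l_coset_def using S2[OF ch(1,4)] by blast
      moreover obtain u0 where u0: "u0 \<in> C'" "u \<in> Qf u0" using C'(3) ch(3) by blast
      moreover have "good u0 (Qf u0) (ef u0)" using gd C'(1) u0(1) by blast
      then have gg: "\<forall>y n u'. dist y z < ef u0 \<and> dist (Tpow T n y) z < ef u0 \<and> u' \<in> Qf u0 \<and> u' \<in> cocycle G T f n y <#\<^bsub>G\<^esub> S y
        \<longrightarrow> u' \<in> U <#>\<^bsub>G\<^esub> S y" unfolding good_def by blast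
      moreover have "\<epsilon> \<le> ef u0" using ele u0(1) .
      ultimately have "u \<in> U <#>\<^bsub>G\<^esub> S y" using d
        by (intro gg[rule_format]) auto
      then show False using dis \<open>u \<in> cocycle G T f n y <#\<^bsub>G\<^esub> S y\<close> by blast
    qed
  qed
  show ?thesis using part1 part2 by blast
qed

end
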